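(* Let $G$ and $H$ be finite simple graphs such that $\delta(G)\le\delta(H)$. Let $S$ be a minimum edge-cut in $G\times H$ and let $B,W$ be the connected components of $(G\times H)-S$. If $|S|<\delta(G\times H)$, then for every $(x,y)\in V(G\times H)$ either $N_G(x)\times\{y\}\subseteq B$ or $N_G(x)\times\{y\}\subseteq W$.
   Context: The direct product $G\times H$ has vertex set $V(G)\times V(H)$, with $(x_1,y_1)$ adjacent to $(x_2,y_2)$ if and only if $x_1x_2\in E(G)$ and $y_1y_2\in E(H)$. $\delta(F)$ denotes the minimum degree of a graph $F$, and $N_G(x)$ the open neighbourhood of $x$ in $G$. A minimum edge-cut is an edge set of minimum size whose removal disconnects the graph; $B$ and $W$ denote the two connected components of $(G\times H)-S$. *)

theory Defs
  imports Main
begin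

definition simple_graph :: "'a set \<Rightarrow> 'a set set \<Rightarrow> bool" where
  "simple_graph V E \<longleftrightarrow> finite V \<and> V \<noteq> {} \<and>
     (\<forall>e\<in>E. \<exists>x y. x \<noteq> y \<and> x \<in> V \<and> y \<in> V \<and> e = {x, y})"

text \<open>Edge set of the direct (tensor) product; its vertex set is V1 \<times> V2.\<close>
definition dprod_edges :: "'a set set \<Rightarrow> 'b set set \<Rightarrow> ('a \<times> 'b) set set" where
  "dprod_edges E1 E2 = {{(x1, y1), (x2, y2)} | x1 y1 x2 y2.
      {x1, x2} \<in> E1 \<and> {y1, y2} \<in> E2}"

definition nbhd :: "'a set set \<Rightarrow> 'a \<Rightarrow> 'a set" where
  "nbhd E x = {y. {x, y} \<in> E}"

definition degree :: "'a set set \<Rightarrow> 'a \<Rightarrow> nat" where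
  "degree E x = card (nbhd E x)"

definition min_degree :: "'a set \<Rightarrow> 'a set set \<Rightarrow> nat" where
  "min_degree V E = Min (degree E ` V)"

definition reach :: "'a set set \<Rightarrow> 'a \<Rightarrow> 'a \<Rightarrow> bool" where
  "reach E = (\<lambda>u v. {u, v} \<in> E)\<^sup>*\<^sup>*"

definition connected_graph :: "'a set \<Rightarrow> 'a set set \<Rightarrow> bool" where
  "connected_graph V E \<longleftrightarrow> (\<forall>u\<in>V. \<forall>v\<in>V. reach E u v)"

definition components :: "'a set \<Rightarrow> 'a set set \<Rightarrow> 'a set set" where
  "components V E = {{v \<in> V. reach E u v} | u. u \<in> V}"

definition edge_cut :: "'a set \<Rightarrow> 'a set set \<Rightarrow> 'a set set \<Rightarrow> bool" where
  "edge_cut V E S \<longleftrightarrow> S \<subseteq> E \<and> \<not> connected_graph V (E - S)"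

definition min_edge_cut :: "'a set \<Rightarrow> 'a set set \<Rightarrow> 'a set set \<Rightarrow> bool" where
  "min_edge_cut V E S \<longleftrightarrow> edge_cut V E S \<and> (\<forall>S'. edge_cut V E S' \<longrightarrow> card S \<le> card S')"

end

theory Submission imports Defs begin

fun wedges :: "'v list \<Rightarrow> 'v set set" where
  "wedges (a # b # xs) = insert {a, b} (wedges (b # xs))"
| "wedges _ = {}"

lemma wedges_reach: "wedges (a # xs) \<subseteq> E \<Longrightarrow> reach E a (last (a # xs))"
proof (induction xs arbitrary: a)
  case Nil
  then show ?case by (simp add: reach_def)
next
  case (Cons b xs)
  then have ab: "{a,b} \<in> E" and r: "reach E b (last (b # xs))" by auto
  have "reach E a b" using ab unfolding reach_def by (rule r_into_rtranclp)
  then show ?case using r unfolding reach_def by simp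
qed

lemma sg_edge: "simple_graph V E \<Longrightarrow> {a,b} \<in> E \<Longrightarrow> a \<noteq> b \<and> a \<in> V \<and> b \<in> V"
  unfolding simple_graph_def by (auto simp: doubleton_eq_iff)

lemma nbhd_sub: "simple_graph V E \<Longrightarrow> nbhd E v \<subseteq> V"
  unfolding nbhd_def using sg_edge by fastforce

lemma nbhd_fin: "simple_graph V E \<Longrightarrow> finite (nbhd E v)"
  using nbhd_sub simple_graph_def finite_subset by metis

lemma choose_slots:
  assumes sg: "simple_graph V E" and xa: "{x,a}\<in>E" and xb: "{x,b}\<in>E" and ab: "a\<noteq>b"
    and dc: "d \<le> card (nbhd E a)"
  shows "\<exists>u. inj_on u {1..<d} \<and> (\<forall>i\<in>{1..<d}. u i \<in> nbhd E a - {x} \<and> (u i = b \<longleftrightarrow> i = 1 \<and> {a,b}\<in>E))"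
proof -
  have fin: "finite (nbhd E a)" using nbhd_fin[OF sg] .
  have xN: "x \<in> nbhd E a" using xa unfolding nbhd_def by (simp add: insert_commute)
  have xb': "x \<noteq> b" using sg_edge[OF sg xb] by simp
  show ?thesis
  proof (cases "{a,b}\<in>E")
    case True
    define A where "A = nbhd E a - {x,b}"
    have bN: "b \<in> nbhd E a" using True unfolding nbhd_def by simp
    have "card (nbhd E a) - card {x,b} \<le> card A" unfolding A_def by (rule diff_card_le_card_Diff) simp
    moreover have "card {x,b} = 2" using xb' by simp
    ultimately have "card {2..<d} \<le> card A" using dc by simp
    then obtain g where g: "g ` {2..<d} \<subseteq> A" "inj_on g {2..<d}"
      using card_le_inj[of "{2..<d}" A] fin unfolding A_def by auto
    define u where "u i = (if i = 1 then b else g i)" for i :: nat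
    have "inj_on u {1..<d}"
    proof (rule inj_onI)
      fix i j assume ij: "i \<in> {1..<d}" "j \<in> {1..<d}" "u i = u j"
      show "i = j"
      proof (cases "i = 1"; cases "j = 1")
        assume "i = 1" "j \<noteq> 1" then show ?thesis using ij g unfolding u_def A_def by (auto simp: image_subset_iff)
      next
        assume "i \<noteq> 1" "j = 1" then show ?thesis using ij g unfolding u_def A_def by (auto simp: image_subset_iff)
      next
        assume "i \<noteq> 1" "j \<noteq> 1" then show ?thesis using ij g unfolding u_def by (auto simp: inj_on_def)
      qed simp
    qed
    moreover have "\<forall>i\<in>{1..<d}. u i \<in> nbhd E a - {x} \<and> (u i = b \<longleftrightarrow> i = 1 \<and> {a,b}\<in>E)"
      using g bN xb' True unfolding u_def A_def by (auto simp: image_subset_iff)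
    ultimately show ?thesis by blast
  next
    case False
    define A where "A = nbhd E a - {x}"
    have "card A = card (nbhd E a) - 1" unfolding A_def using xN fin by simp
    then have "card {1..<d} \<le> card A" using dc by simp
    then obtain g where g: "g ` {1..<d} \<subseteq> A" "inj_on g {1..<d}"
      using card_le_inj[of "{1..<d}" A] fin unfolding A_def by auto
    have "\<forall>i\<in>{1..<d}. g i \<in> nbhd E a - {x} \<and> (g i = b \<longleftrightarrow> i = 1 \<and> {a,b}\<in>E)"
      using g False unfolding A_def nbhd_def by auto
    then show ?thesis using g by blast
  qed
qed

lemma dprod_I: "{a,c}\<in>EG \<Longrightarrow> {b,d}\<in>EH \<Longrightarrow> {(a,b),(c,d)} \<in> dprod_edges EG EH"
  unfolding dprod_edges_def by blast

lemma nbhd_prod: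
  assumes "simple_graph VG EG" "simple_graph VH EH"
  shows "nbhd (dprod_edges EG EH) (a,b) = nbhd EG a \<times> nbhd EH b"
proof
  show "nbhd EG a \<times> nbhd EH b \<subseteq> nbhd (dprod_edges EG EH) (a, b)"
    unfolding nbhd_def using dprod_I by fast
next
  show "nbhd (dprod_edges EG EH) (a, b) \<subseteq> nbhd EG a \<times> nbhd EH b"
  proof
    fix p assume "p \<in> nbhd (dprod_edges EG EH) (a, b)"
    then obtain c d where p: "p = (c,d)" and "{(a,b),(c,d)} \<in> dprod_edges EG EH"
      unfolding nbhd_def by (cases p) auto
    then obtain x1 y1 x2 y2 where e: "{(a,b),(c,d)} = {(x1,y1),(x2,y2)}" "{x1,x2}\<in>EG" "{y1,y2}\<in>EH"
      unfolding dprod_edges_def by blast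
    then have "{a,c}\<in>EG \<and> {b,d}\<in>EH" by (auto simp: doubleton_eq_iff insert_commute)
    then show "p \<in> nbhd EG a \<times> nbhd EH b" unfolding nbhd_def p by simp
  qed
qed

lemma SS:
  assumes e: "e \<in> {{(xa,y),(x,z)}, {(x,z),(xb,y)}}" "e \<in> {{(xa,y),(x,z')}, {(x,z'),(xb,y)}}"
   and d: "x \<noteq> xa" "x \<noteq> xb"
  shows "z = z'"
  using e apply (elim insertE emptyE)
  by (simp_all add: doubleton_eq_iff d d[symmetric])

lemma SF:
  assumes d: "x \<noteq> xa" "x \<noteq> xb" "xa \<noteq> xb"
  and u: "u i' \<noteq> x" "u i' \<noteq> xa"
  and v: "v i' \<noteq> x" "v i' \<noteq> xb"
  and ww: "w z' i' \<noteq> y" "w z' i' \<noteq> z'" "z \<noteq> y" "z' \<noteq> y"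
  and e: "e \<in> {{(xa,y),(x,z)}, {(x,z),(xb,y)}}"
         "e \<in> {{(xa,y),(u i',z')}, {(u i',z'),(xa,w z' i')}, {(xa,w z' i'),(x,z')}, {(x,z'),(xb,w z' i')}, {(xb,w z' i'),(v i',z')}, {(v i',z'),(xb,y)}}"
  shows False
  using e apply (elim insertE emptyE)
  by (simp_all add: doubleton_eq_iff d u v ww d[symmetric] u[symmetric] v[symmetric] ww[symmetric])

lemma ST:
  assumes d: "x \<noteq> xa" "x \<noteq> xb" "xa \<noteq> xb"
  and ww: "w z' i' \<noteq> y" "w z' i' \<noteq> z'" "z \<noteq> y" "z' \<noteq> y"
  and e: "e \<in> {{(xa,y),(x,z)}, {(x,z),(xb,y)}}"
         "e \<in> {{(xa,y),(xb,z')}, {(xb,z'),(xa,w z' i')}, {(xa,w z' i'),(xb,y)}}"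
  shows False
  using e apply (elim insertE emptyE)
  by (simp_all add: doubleton_eq_iff d ww d[symmetric] ww[symmetric])

lemma TT:
  assumes d: "x \<noteq> xa" "x \<noteq> xb" "xa \<noteq> xb"
  and inj: "z = z' \<Longrightarrow> w z i = w z' i' \<Longrightarrow> i = i'"
  and ww: "w z i \<noteq> y" "w z i \<noteq> z" "w z' i' \<noteq> y" "w z' i' \<noteq> z'" "z \<noteq> y" "z' \<noteq> y"
  and e: "e \<in> {{(xa,y),(xb,z)}, {(xb,z),(xa,w z i)}, {(xa,w z i),(xb,y)}}"
         "e \<in> {{(xa,y),(xb,z')}, {(xb,z'),(xa,w z' i')}, {(xa,w z' i'),(xb,y)}}"
  and ii: "i = i'" and t: "w (w z i) i = z" "w (w z' i') i' = z'"
  shows "z = z'"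
  using e apply (elim insertE emptyE)
  apply (simp_all add: doubleton_eq_iff d ww d[symmetric] ww[symmetric])
  using ii t by metis+

lemma TF:
  assumes d: "x \<noteq> xa" "x \<noteq> xb" "xa \<noteq> xb"
  and u: "u i = xb" "u i' \<noteq> x" "u i' \<noteq> xa"
  and v: "v i' \<noteq> x" "v i' \<noteq> xb"
  and ux: "u i' = xb \<Longrightarrow> i = i'" "v i' = xa \<Longrightarrow> i = i'"
  and ww: "w z i \<noteq> y" "w z i \<noteq> z" "w z' i' \<noteq> y" "w z' i' \<noteq> z'" "z \<noteq> y" "z' \<noteq> y"
  and t: "w z i \<in> Z" "w (w z i) i = z"
  and nt: "\<not> (u i' = xb \<and> w z' i' \<in> Z \<and> w (w z' i') i' = z')"
  and Z: "z \<in> Z" "z' \<in> Z"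
  and e: "e \<in> {{(xa,y),(xb,z)}, {(xb,z),(xa,w z i)}, {(xa,w z i),(xb,y)}}"
         "e \<in> {{(xa,y),(u i',z')}, {(u i',z'),(xa,w z' i')}, {(xa,w z' i'),(x,z')}, {(x,z'),(xb,w z' i')}, {(xb,w z' i'),(v i',z')}, {(v i',z'),(xb,y)}}"
  shows False
  using e apply (elim insertE emptyE)
  apply (simp_all add: doubleton_eq_iff d ww v d[symmetric] ww[symmetric] v[symmetric] u(2,3) u(2,3)[symmetric])
  using ux nt Z t u(1) by metis+

lemma FF:
  assumes d: "x \<noteq> xa" "x \<noteq> xb" "xa \<noteq> xb"
  and u: "u i \<noteq> x" "u i \<noteq> xa" "u i' \<noteq> x" "u i' \<noteq> xa"
  and v: "v i \<noteq> x" "v i \<noteq> xb" "v i' \<noteq> x" "v i' \<noteq> xb"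
  and inj: "u i = u i' \<Longrightarrow> i = i'" "v i = v i' \<Longrightarrow> i = i'" "z = z' \<Longrightarrow> w z i = w z' i' \<Longrightarrow> i = i'"
  and ux: "u i = xb \<Longrightarrow> v i' = xa \<Longrightarrow> i = i'" "u i' = xb \<Longrightarrow> v i = xa \<Longrightarrow> i = i'"
  and ww: "w z i \<noteq> y" "w z i \<noteq> z" "w z' i' \<noteq> y" "w z' i' \<noteq> z'" "z \<noteq> y" "z' \<noteq> y"
  and nt: "\<not> (u i = xb \<and> w z i \<in> Z \<and> w (w z i) i = z)" "\<not> (u i' = xb \<and> w z' i' \<in> Z \<and> w (w z' i') i' = z')"
  and Z: "z \<in> Z" "z' \<in> Z"
  and e: "e \<in> {{(xa,y),(u i,z)}, {(u i,z),(xa,w z i)}, {(xa,w z i),(x,z)}, {(x,z),(xb,w z i)}, {(xb,w z i),(v i,z)}, {(v i,z),(xb,y)}}"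
         "e \<in> {{(xa,y),(u i',z')}, {(u i',z'),(xa,w z' i')}, {(xa,w z' i'),(x,z')}, {(x,z'),(xb,w z' i')}, {(xb,w z' i'),(v i',z')}, {(v i',z'),(xb,y)}}"
  shows "z = z' \<and> i = i'"
  using e
  apply (elim insertE emptyE)
  apply (simp_all add: doubleton_eq_iff d u v ww d[symmetric] u[symmetric] v[symmetric] ww[symmetric])
  using inj ux nt Z by (metis)+

lemma core:
  fixes VG :: "'a set" and EG :: "'a set set" and VH :: "'b set" and EH :: "'b set set"
  assumes sg: "simple_graph VG EG" and sh: "simple_graph VH EH"
    and ex1: "{x,x1} \<in> EG" and ex2: "{x,x2} \<in> EG" and x12: "x1 \<noteq> x2"
    and dG: "\<forall>v\<in>VG. d \<le> card (nbhd EG v)" and dH: "\<forall>v\<in>VH. d \<le> card (nbhd EH v)"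
    and S: "finite S" and nr: "\<not> reach (dprod_edges EG EH - S) (x1,y) (x2,y)"
  shows "d * card (nbhd EH y) \<le> card S"
proof (cases "d = 0")
  case True then show ?thesis by simp
next
  case False
  have bx: "x \<noteq> x1" "x \<noteq> x2" "x \<in> VG" "x1 \<in> VG" "x2 \<in> VG"
    using sg_edge[OF sg ex1] sg_edge[OF sg ex2] by auto
  define I where "I = {1..<d}"
  obtain u where u: "inj_on u I" "\<forall>i\<in>I. u i \<in> nbhd EG x1 - {x} \<and> (u i = x2 \<longleftrightarrow> i = 1 \<and> {x1,x2}\<in>EG)"
    using choose_slots[OF sg ex1 ex2 x12, of d] dG bx unfolding I_def by blast
  obtain v where v: "inj_on v I" "\<forall>i\<in>I. v i \<in> nbhd EG x2 - {x} \<and> (v i = x1 \<longleftrightarrow> i = 1 \<and> {x2,x1}\<in>EG)"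
    using choose_slots[OF sg ex2 ex1 x12[symmetric], of d] dG bx unfolding I_def by blast
  define Z where "Z = nbhd EH y"
  have "\<forall>z\<in>Z. \<exists>f. inj_on f I \<and> (\<forall>i\<in>I. f i \<in> nbhd EH z - {y})"
  proof
    fix z assume z: "z \<in> Z"
    then have yz: "{y,z} \<in> EH" unfolding Z_def nbhd_def by simp
    have zV: "z \<in> VH" using sg_edge[OF sh yz] by simp
    have fin: "finite (nbhd EH z)" by (rule nbhd_fin[OF sh])
    have yN: "y \<in> nbhd EH z" using yz unfolding nbhd_def by (simp add: insert_commute)
    have "card (nbhd EH z - {y}) = card (nbhd EH z) - 1" using yN fin by simp
    then have "card I \<le> card (nbhd EH z - {y})" using dH zV unfolding I_def by force
    then show "\<exists>f. inj_on f I \<and> (\<forall>i\<in>I. f i \<in> nbhd EH z - {y})"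
      using card_le_inj[of I "nbhd EH z - {y}"] fin unfolding I_def by auto
  qed
  then obtain w where w: "\<forall>z\<in>Z. inj_on (w z) I \<and> (\<forall>i\<in>I. w z i \<in> nbhd EH z - {y})"
    using bchoice[of Z "\<lambda>z f. inj_on f I \<and> (\<forall>i\<in>I. f i \<in> nbhd EH z - {y})"] by blast
  define tri where "tri z i \<longleftrightarrow> u i = x2 \<and> w z i \<in> Z \<and> w (w z i) i = z" for z i
  define walk where "walk z i = (if i = 0 then [(x1,y),(x,z),(x2,y)]
     else if tri z i then [(x1,y),(x2,z),(x1,w z i),(x2,y)]
     else [(x1,y),(u i,z),(x1,w z i),(x,z),(x2,w z i),(v i,z),(x2,y)])" for z i
  define J where "J = Z \<times> insert 0 I"
  have I0: "0 \<notin> I" unfolding I_def by simp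
  have zf: "{y,z}\<in>EH" "{z,y}\<in>EH" "z \<noteq> y" if "z \<in> Z" for z
    using that sg_edge[OF sh, of y z] unfolding Z_def nbhd_def by (auto simp: insert_commute)
  have uf: "{x1, u i}\<in>EG" "{u i, x1}\<in>EG" "u i \<noteq> x" "u i \<noteq> x1" if "i \<in> I" for i
    using that u(2) sg_edge[OF sg, of x1 "u i"] unfolding nbhd_def by (auto simp: insert_commute)
  have vf: "{x2, v i}\<in>EG" "{v i, x2}\<in>EG" "v i \<noteq> x" "v i \<noteq> x2" if "i \<in> I" for i
    using that v(2) sg_edge[OF sg, of x2 "v i"] unfolding nbhd_def by (auto simp: insert_commute)
  have wf: "{z, w z i}\<in>EH" "{w z i, z}\<in>EH" "w z i \<noteq> y" "w z i \<noteq> z" if "z \<in> Z" "i \<in> I" for z i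
    using that w sg_edge[OF sh, of z "w z i"] unfolding nbhd_def by (auto simp: insert_commute)
  have winj: "i = j" if "z \<in> Z" "i \<in> I" "j \<in> I" "w z i = w z j" for z i j
    using that w by (meson inj_onD)
  have uinj: "i = j" if "i \<in> I" "j \<in> I" "u i = u j" for i j
    using that u(1) by (meson inj_onD)
  have vinj: "i = j" if "i \<in> I" "j \<in> I" "v i = v j" for i j
    using that v(1) by (meson inj_onD)
  have ux: "i = j" if "i \<in> I" "j \<in> I" "u i = x2" "v j = x1" for i j
    using that u(2) v(2) by auto
  have xx: "{x1,x}\<in>EG" "{x,x1}\<in>EG" "{x2,x}\<in>EG" "{x,x2}\<in>EG" using ex1 ex2 by (auto simp: insert_commute)
  have triE: "{x1,x2}\<in>EG" "{x2,x1}\<in>EG" "{y, w z i} \<in> EH" "{w z i, y} \<in> EH"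
    if "i \<in> I" "tri z i" for z i
    using that u(2) zf[of "w z i"] unfolding tri_def nbhd_def by (auto simp: insert_commute)
  have walk_ok: "wedges (walk z i) \<subseteq> dprod_edges EG EH \<and> walk z i = (x1,y) # tl (walk z i)
      \<and> last (walk z i) = (x2,y)" if "(z,i) \<in> J" for z i
  proof -
    have z: "z \<in> Z" and i: "i \<in> insert 0 I" using that unfolding J_def by auto
    show ?thesis
    proof (cases "i = 0")
      case True then show ?thesis using z zf xx by (auto simp: walk_def intro!: dprod_I)
    next
      case False
      then have iI: "i \<in> I" using i by auto
      show ?thesis
      proof (cases "tri z i")
        case True then show ?thesis using False z iI zf[OF z] triE[OF iI True] wf[OF z iI]
          by (auto simp: walk_def intro!: dprod_I)
      next
        case nt: False then show ?thesis using False z iI zf[OF z] xx uf[OF iI] vf[OF iI] wf[OF z iI]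
          by (auto simp: walk_def intro!: dprod_I)
      qed
    qed
  qed
  have hit: "\<exists>e\<in>S. e \<in> wedges (walk z i)" if zJ: "(z,i) \<in> J" for z i
  proof (rule ccontr)
    assume "\<not> ?thesis"
    then have sub: "wedges (walk z i) \<subseteq> dprod_edges EG EH - S" using walk_ok[OF zJ] by auto
    obtain t where t: "walk z i = (x1,y) # t" using walk_ok[OF zJ] by blast
    have "reach (dprod_edges EG EH - S) (x1,y) (last ((x1,y) # t))"
      by (rule wedges_reach) (use sub t in simp)
    then show False using nr walk_ok[OF zJ] t by simp
  qed
  have disj: "z = z' \<and> i = i'"
    if zi: "(z,i) \<in> J" "(z',i') \<in> J" and e: "e \<in> wedges (walk z i)" "e \<in> wedges (walk z' i')" for z i z' i' e
  proof -
    have z: "z \<in> Z" "z' \<in> Z" and i: "i \<in> insert 0 I" "i' \<in> insert 0 I" using zi unfolding J_def by auto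
    have zy: "z \<noteq> y" "z' \<noteq> y" using zf z by auto
    have wS: "wedges (walk z 0) = {{(x1,y),(x,z)}, {(x,z),(x2,y)}}" for z
      by (simp add: walk_def)
    have wT: "wedges (walk z i) = {{(x1,y),(x2,z)}, {(x2,z),(x1,w z i)}, {(x1,w z i),(x2,y)}}"
      if "i \<noteq> 0" "tri z i" for z i using that by (simp add: walk_def)
    have wF: "wedges (walk z i) = {{(x1,y),(u i,z)}, {(u i,z),(x1,w z i)}, {(x1,w z i),(x,z)}, {(x,z),(x2,w z i)}, {(x2,w z i),(v i,z)}, {(v i,z),(x2,y)}}"
      if "i \<noteq> 0" "\<not> tri z i" for z i using that by (simp add: walk_def)
    show ?thesis
    proof (cases "i = 0")
      case i0: True
      show ?thesis
      proof (cases "i' = 0")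
        case True
        have "z = z'" by (rule SS[OF e(1)[unfolded i0 wS] e(2)[unfolded True wS] bx(1,2)])
        then show ?thesis using i0 True by simp
      next
        case False
        then have iI: "i' \<in> I" using i by auto
        show ?thesis
        proof (cases "tri z' i'")
          case True
          have False by (rule ST[where w=w and z=z and z'=z' and i'=i', OF bx(1,2) x12 wf(3,4)[OF z(2) iI] zy e(1)[unfolded i0 wS] e(2)[unfolded wT[OF False True]]])
          then show ?thesis ..
        next
          case nt: False
          have False by (rule SF[where u=u and v=v and w=w and z=z and z'=z' and i'=i', OF bx(1,2) x12 uf(3,4)[OF iI] vf(3,4)[OF iI] wf(3,4)[OF z(2) iI] zy e(1)[unfolded i0 wS] e(2)[unfolded wF[OF False nt]]])
          then show ?thesis ..
        qed
      qed
    next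
      case i0: False
      then have iI: "i \<in> I" using i by auto
      show ?thesis
      proof (cases "i' = 0")
        case True
        show ?thesis
        proof (cases "tri z i")
          case t: True
          have False by (rule ST[where w=w and z=z' and z'=z and i'=i, OF bx(1,2) x12 wf(3,4)[OF z(1) iI] zy(2,1) e(2)[unfolded True wS] e(1)[unfolded wT[OF i0 t]]])
          then show ?thesis ..
        next
          case nt: False
          have False by (rule SF[where u=u and v=v and w=w and z=z' and z'=z and i'=i, OF bx(1,2) x12 uf(3,4)[OF iI] vf(3,4)[OF iI] wf(3,4)[OF z(1) iI] zy(2,1) e(2)[unfolded True wS] e(1)[unfolded wF[OF i0 nt]]])
          then show ?thesis ..
        qed
      next
        case i0': False
        then have iI': "i' \<in> I" using i by auto
        have inj3: "z = z' \<Longrightarrow> w z i = w z' i' \<Longrightarrow> i = i'" using winj[OF z(1) iI iI'] by simp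
        have inj3': "z' = z \<Longrightarrow> w z' i' = w z i \<Longrightarrow> i' = i" using winj[OF z(1) iI iI'] by auto
        show ?thesis
        proof (cases "tri z i"; cases "tri z' i'")
          assume t: "tri z i" and t': "tri z' i'"
          have ii: "i = i'" using uinj[OF iI iI'] t t' unfolding tri_def by simp
          have tt: "w (w z i) i = z" "w (w z' i') i' = z'" using t t' unfolding tri_def by auto
          have "z = z'" by (rule TT[where w=w and z=z and z'=z' and i=i and i'=i', OF bx(1,2) x12 inj3 wf(3,4)[OF z(1) iI] wf(3,4)[OF z(2) iI'] zy
             e(1)[unfolded wT[OF i0 t]] e(2)[unfolded wT[OF i0' t']] ii tt])
          then show ?thesis using ii by simp
        next
          assume t: "tri z i" and t': "\<not> tri z' i'"
          have tt: "u i = x2" "w z i \<in> Z" "w (w z i) i = z" using t unfolding tri_def by auto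
          have ux1: "u i' = x2 \<Longrightarrow> i = i'" using uinj[OF iI iI'] tt(1) by simp
          have ux2: "v i' = x1 \<Longrightarrow> i = i'" using ux[OF iI iI'] tt(1) by simp
          have False by (rule TF[where u=u and v=v and w=w and z=z and z'=z' and i=i and i'=i' and Z=Z, OF bx(1,2) x12 tt(1) uf(3,4)[OF iI'] vf(3,4)[OF iI'] ux1 ux2
             wf(3,4)[OF z(1) iI] wf(3,4)[OF z(2) iI'] zy tt(2,3) t'[unfolded tri_def] z
             e(1)[unfolded wT[OF i0 t]] e(2)[unfolded wF[OF i0' t']]])
          then show ?thesis ..
        next
          assume t: "\<not> tri z i" and t': "tri z' i'"
          have tt: "u i' = x2" "w z' i' \<in> Z" "w (w z' i') i' = z'" using t' unfolding tri_def by auto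
          have ux1: "u i = x2 \<Longrightarrow> i' = i" using uinj[OF iI iI'] tt(1) by auto
          have ux2: "v i = x1 \<Longrightarrow> i' = i" using ux[OF iI' iI] tt(1) by simp
          have False by (rule TF[where u=u and v=v and w=w and z=z' and z'=z and i=i' and i'=i and Z=Z, OF bx(1,2) x12 tt(1) uf(3,4)[OF iI] vf(3,4)[OF iI] ux1 ux2
             wf(3,4)[OF z(2) iI'] wf(3,4)[OF z(1) iI] zy(2,1) tt(2,3) t[unfolded tri_def] z(2,1)
             e(2)[unfolded wT[OF i0' t']] e(1)[unfolded wF[OF i0 t]]])
          then show ?thesis ..
        next
          assume t: "\<not> tri z i" and t': "\<not> tri z' i'"
          have ux1: "u i = x2 \<Longrightarrow> v i' = x1 \<Longrightarrow> i = i'" using ux[OF iI iI'] by simp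
          have ux2: "u i' = x2 \<Longrightarrow> v i = x1 \<Longrightarrow> i = i'" using ux[OF iI' iI] by auto
          show ?thesis by (rule FF[where u=u and v=v and w=w and z=z and z'=z' and i=i and i'=i' and Z=Z, OF bx(1,2) x12 uf(3,4)[OF iI] uf(3,4)[OF iI'] vf(3,4)[OF iI] vf(3,4)[OF iI']
             uinj[OF iI iI'] vinj[OF iI iI'] inj3 ux1 ux2 wf(3,4)[OF z(1) iI] wf(3,4)[OF z(2) iI'] zy
             t[unfolded tri_def] t'[unfolded tri_def] z
             e(1)[unfolded wF[OF i0 t]] e(2)[unfolded wF[OF i0' t']]])
        qed
      qed
    qed
  qed
  obtain f where f: "\<forall>j\<in>J. f j \<in> S \<and> f j \<in> wedges (case j of (z,i) \<Rightarrow> walk z i)"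
    using bchoice[of J "\<lambda>j e. e \<in> S \<and> e \<in> wedges (case j of (z,i) \<Rightarrow> walk z i)"] hit by fastforce
  have "inj_on f J"
  proof (rule inj_onI)
    fix j j' assume "j \<in> J" "j' \<in> J" "f j = f j'"
    then show "j = j'" using f disj by (cases j; cases j') (metis (no_types, lifting) case_prod_conv)
  qed
  moreover have "f ` J \<subseteq> S" using f by auto
  ultimately have "card J \<le> card S" using S by (rule card_inj_on_le)
  moreover have "card J = card Z * d"
  proof -
    have "card (insert 0 I) = d" using I0 False unfolding I_def by simp
    then show ?thesis unfolding J_def by (simp add: card_cartesian_product)
  qed
  ultimately show ?thesis unfolding Z_def by (simp add: mult.commute)
qed


theorem lemma2p3:
  fixes VG :: "'a set" and EG :: "'a set set" and VH :: "'b set" and EH :: "'b set set"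
    and S :: "('a \<times> 'b) set set" and B W :: "('a \<times> 'b) set"
  assumes "simple_graph VG EG" and "simple_graph VH EH"
    and "min_degree VG EG \<le> min_degree VH EH"
    and "min_edge_cut (VG \<times> VH) (dprod_edges EG EH) S"
    and "components (VG \<times> VH) (dprod_edges EG EH - S) = {B, W}" and "B \<noteq> W"
    and "card S < min_degree (VG \<times> VH) (dprod_edges EG EH)"
  shows "\<forall>(x, y) \<in> VG \<times> VH. nbhd EG x \<times> {y} \<subseteq> B \<or> nbhd EG x \<times> {y} \<subseteq> W"
proof -
  note sg = assms(1) and sh = assms(2)
  define E' where "E' = dprod_edges EG EH - S"
  have finG: "finite VG" "VG \<noteq> {}" using sg unfolding simple_graph_def by auto
  have finH: "finite VH" "VH \<noteq> {}" using sh unfolding simple_graph_def by auto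
  define dG where "dG = min_degree VG EG"
  define dH where "dH = min_degree VH EH"
  have dGle: "\<forall>v\<in>VG. dG \<le> card (nbhd EG v)"
    unfolding dG_def min_degree_def degree_def using finG by (auto intro: Min_le)
  have dHle: "\<forall>v\<in>VH. dH \<le> card (nbhd EH v)"
    unfolding dH_def min_degree_def degree_def using finH by (auto intro: Min_le)
  have dGH: "dG \<le> dH" using assms(3) unfolding dG_def dH_def .
  obtain x0 where x0: "x0 \<in> VG" "card (nbhd EG x0) = dG"
  proof -
    have "Min ((\<lambda>v. card (nbhd EG v)) ` VG) \<in> (\<lambda>v. card (nbhd EG v)) ` VG"
      using finG by (intro Min_in) auto
    then show ?thesis using that unfolding dG_def min_degree_def degree_def by auto
  qed
  obtain y0 where y0: "y0 \<in> VH" "card (nbhd EH y0) = dH"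
  proof -
    have "Min ((\<lambda>v. card (nbhd EH v)) ` VH) \<in> (\<lambda>v. card (nbhd EH v)) ` VH"
      using finH by (intro Min_in) auto
    then show ?thesis using that unfolding dH_def min_degree_def degree_def by auto
  qed
  have mdP: "min_degree (VG \<times> VH) (dprod_edges EG EH) \<le> dG * dH"
  proof -
    have "min_degree (VG \<times> VH) (dprod_edges EG EH) \<le> degree (dprod_edges EG EH) (x0,y0)"
      unfolding min_degree_def using finG finH x0 y0 by (intro Min_le) auto
    also have "\<dots> = dG * dH"
      unfolding degree_def nbhd_prod[OF sg sh] using x0 y0 by (simp add: card_cartesian_product)
    finally show ?thesis .
  qed
  have SE: "S \<subseteq> dprod_edges EG EH" using assms(4) unfolding min_edge_cut_def edge_cut_def by auto
  have "dprod_edges EG EH \<subseteq> Pow (VG \<times> VH)"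
  proof
    fix e assume "e \<in> dprod_edges EG EH"
    then obtain a1 b1 a2 b2 where "e = {(a1,b1),(a2,b2)}" "{a1,a2}\<in>EG" "{b1,b2}\<in>EH"
      unfolding dprod_edges_def by blast
    then show "e \<in> Pow (VG \<times> VH)" using sg_edge[OF sg] sg_edge[OF sh] by auto
  qed
  then have finS: "finite S" using SE finG finH by (meson finite_Pow_iff finite_SigmaI finite_subset)
  have cover: "v \<in> B \<or> v \<in> W" if "v \<in> VG \<times> VH" for v
  proof -
    have "{w \<in> VG \<times> VH. reach E' v w} \<in> components (VG \<times> VH) E'"
      unfolding components_def using that by blast
    moreover have "v \<in> {w \<in> VG \<times> VH. reach E' v w}" using that unfolding reach_def by simp
    ultimately show ?thesis using assms(5) unfolding E'_def by auto
  qed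
  obtain c where c: "B = {w \<in> VG \<times> VH. reach E' c w}"
  proof -
    have "B \<in> components (VG \<times> VH) E'" using assms(5) unfolding E'_def by simp
    then show ?thesis using that unfolding components_def by blast
  qed
  have main: "nbhd EG x \<times> {y} \<subseteq> B \<or> nbhd EG x \<times> {y} \<subseteq> W" if xy: "x \<in> VG" "y \<in> VH" for x y
  proof (rule ccontr)
    assume "\<not> ?thesis"
    then obtain a b where a: "a \<in> nbhd EG x" "(a,y) \<notin> B" and b: "b \<in> nbhd EG x" "(b,y) \<notin> W" by auto
    have ea: "{x,a} \<in> EG" and eb: "{x,b} \<in> EG" using a b unfolding nbhd_def by auto
    have aV: "a \<in> VG" and bV: "b \<in> VG" using sg_edge[OF sg ea] sg_edge[OF sg eb] by auto
    have aW: "(a,y) \<in> W" using cover[of "(a,y)"] aV xy a by auto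
    have bB: "(b,y) \<in> B" using cover[of "(b,y)"] bV xy b by auto
    have ba: "b \<noteq> a" using aW a bB by auto
    have nr: "\<not> reach E' (b,y) (a,y)"
    proof
      assume r: "reach E' (b,y) (a,y)"
      have "reach E' c (b,y)" using bB c by auto
      then have "reach E' c (a,y)" using r unfolding reach_def by (rule rtranclp_trans)
      then have "(a,y) \<in> B" using c aV xy by auto
      then show False using a by simp
    qed
    have "dG * card (nbhd EH y) \<le> card S"
      by (rule core[OF sg sh eb ea ba dGle _ finS nr[unfolded E'_def]]) (use dGle dHle dGH in force)
    moreover have "dG * dH \<le> dG * card (nbhd EH y)" using dHle xy by simp
    ultimately show False using mdP assms(7) by linarith
  qed
  show ?thesis using main by auto
qed

end
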